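(* Assume $h$ satisfies Assumption 1. If $B^s\ge B^d+1$, then $\hat B^d=B^d$ and $\hat\epsilon(x,i)=0$ for all $i\in\{0,1\}$ and $x=0,1,\dots,B^s$.
   Context: Parameters: $\lambda>0$, $0<\mu_l<\mu_h$, $\delta=\mu_h-\mu_l$, $\Lambda=\lambda+\mu_h$, $R\ge 0$, $c>0$, discount rate $\beta>0$ with the normalization $\Lambda+\beta=1$, and $h:\{0,1,2,\dots\}\to\mathbb{R}$ nondecreasing and convex with $h(0)=0$. Assumption 1: (1) there is $\theta>1$ with $h(x+1)\le\theta h(x)$ for all $x>0$; (2) there exist $\gamma\in[0,1)$ and a positive integer $J$ with $\left(\frac{\Lambda}{\Lambda+\beta}\right)^J[R+c+h(x+J)]\le\gamma[R+c+h(x)]$ for all $x\ge0$. Combined problem finite-horizon values on $S=\{0,1,\dots\}\times\{0,1\}$: $v_0\equiv0$, $v_{n+1}(0,0)=\lambda v_n(0,1)+\mu_h v_n(0,0)$; $v_{n+1}(x,0)=-h(x)+\lambda v_n(x,1)+\mu_l v_n(x-1,0)+\max\{\delta v_n(x,0),-c+\delta v_n(x-1,0)\}$ for $x\ge1$; $v_{n+1}(x,1)=\max\{R+v_{n+1}(x+1,0),v_{n+1}(x,0)\}$. Admission-control subproblem: $\hat v$ defined identically except that the max in the $(x,0)$ equation is replaced by $\delta\hat v_n(x,0)$ (service rate always $\mu_l$). Infinite-horizon values: $v=\lim_n v_n$ and $\hat v=\lim_n\hat v_n$ (pointwise limits, which exist under Assumption 1); they are the optimal infinite-horizon discounted profits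 of the combined problem and of the admission control subproblem. $\hat\epsilon(x,i)=v(x,i)-\hat v(x,i)$ (value of service flexibility). With $\Delta(x,0)=v(x,0)-v(x+1,0)$, $\hat\Delta(x,0)=\hat v(x,0)-\hat v(x+1,0)$ and $T_f(\theta)=\sup\{k\ge0:f(k)\le\theta\}$ ($\sup\emptyset=-1$, $+\infty$ allowed), the stationary optimal thresholds are $B^s=1+T_{\Delta(\cdot,0)}(c/\delta)$ (high rate used in states $x>B^s$, low rate otherwise), $B^d=T_{\Delta(\cdot,0)}(R)$ (admit iff $x\le B^d$) for the combined problem, and $\hat B^d=T_{\hat\Delta(\cdot,0)}(R)$ for the subproblem. *)

theory Defs
  imports "HOL-Analysis.Analysis"
begin

text \<open>States are pairs (x,i) with i \<in> {0,1}; i = 0 is encoded as 0, any other i as 1.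
  The flag flex = True gives the combined problem (choice of service rate),
  flex = False gives the admission-control subproblem (rate always mu_l).\<close>

primrec vval :: "bool \<Rightarrow> real \<Rightarrow> real \<Rightarrow> real \<Rightarrow> real \<Rightarrow> real \<Rightarrow> (nat \<Rightarrow> real)
                  \<Rightarrow> nat \<Rightarrow> nat \<times> nat \<Rightarrow> real" where
  "vval flex lam mul muh R c h 0 = (\<lambda>_. 0)"
| "vval flex lam mul muh R c h (Suc n) =
    (let V = vval flex lam mul muh R c h n;
         \<delta> = muh - mul;
         V0 = (\<lambda>x. if x = 0 then lam * V (0,1) + muh * V (0,0)
                   else - h x + lam * V (x,1) + mul * V (x-1,0)
                        + (if flex then max (\<delta> * V (x,0)) (- c + \<delta> * V (x-1,0))
                           else \<delta> * V (x,0)))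
     in (\<lambda>(x,i). if i = 0 then V0 x else max (R + V0 (x+1)) (V0 x)))"

definition vinf :: "bool \<Rightarrow> real \<Rightarrow> real \<Rightarrow> real \<Rightarrow> real \<Rightarrow> real \<Rightarrow> (nat \<Rightarrow> real)
                  \<Rightarrow> nat \<times> nat \<Rightarrow> real" where
  "vinf flex lam mul muh R c h s = lim (\<lambda>n. vval flex lam mul muh R c h n s)"

definition Tthr :: "(nat \<Rightarrow> real) \<Rightarrow> real \<Rightarrow> ereal" where
  "Tthr f \<theta> = (if {k. f k \<le> \<theta>} = {} then -1 else Sup ((\<lambda>k. ereal (real k)) ` {k. f k \<le> \<theta>}))"

definition Delta0 :: "(nat \<times> nat \<Rightarrow> real) \<Rightarrow> nat \<Rightarrow> real" where
  "Delta0 v x = v (x,0) - v (x+1,0)"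

definition Assumption1 :: "real \<Rightarrow> real \<Rightarrow> real \<Rightarrow> real \<Rightarrow> real \<Rightarrow> real \<Rightarrow> (nat \<Rightarrow> real) \<Rightarrow> bool" where
  "Assumption1 lam mul muh R c \<beta> h \<longleftrightarrow>
     (\<exists>\<theta>>1. \<forall>x>0. h (x+1) \<le> \<theta> * h x) \<and>
     (\<exists>\<gamma> J. 0 \<le> \<gamma> \<and> \<gamma> < 1 \<and> J > 0 \<and>
        (\<forall>x. ((lam + muh) / (lam + muh + \<beta>)) ^ J * (R + c + h (x + J)) \<le> \<gamma> * (R + c + h x)))"

end

theory Submission
  imports Defs
begin



definition V0op :: "bool \<Rightarrow> real \<Rightarrow> real \<Rightarrow> real \<Rightarrow> real \<Rightarrow> (nat \<Rightarrow> real) \<Rightarrow> (nat \<times> nat \<Rightarrow> real) \<Rightarrow> nat \<Rightarrow> real" where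
  "V0op flex lam mul muh c h V x = (if x = 0 then lam * V (0,1) + muh * V (0,0)
                   else - h x + lam * V (x,1) + mul * V (x-1,0)
                        + (if flex then max ((muh - mul) * V (x,0)) (- c + (muh - mul) * V (x-1,0))
                           else (muh - mul) * V (x,0)))"

lemma vval_Suc0: "vval flex lam mul muh R c h (Suc n) (x,0) = V0op flex lam mul muh c h (vval flex lam mul muh R c h n) x"
  by (simp add: Let_def V0op_def)

lemma vval_Suc1: "i \<noteq> 0 \<Longrightarrow> vval flex lam mul muh R c h (Suc n) (x,i) =
   max (R + vval flex lam mul muh R c h (Suc n) (x+1,0)) (vval flex lam mul muh R c h (Suc n) (x,0))"
  by (simp add: Let_def V0op_def)

declare vval.simps(2)[simp del]

lemma V0op_unif:
  assumes "h 0 = 0" "c > 0"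
  shows "V0op flex lam mul muh c h V x = - h x + lam * V (x,1) + mul * V (x-1,0)
     + (if flex then max ((muh - mul) * V (x,0)) (- c + (muh - mul) * V (x-1,0)) else (muh - mul) * V (x,0))"
  using assms by (auto simp: V0op_def algebra_simps)




lemma g_conc:
  fixes R a1 a2 a3 a4 :: real
  assumes "a1 - a2 \<le> a2 - a3" "a2 - a3 \<le> a3 - a4"
  shows "max (R + a2) a1 - max (R + a3) a2 \<le> max (R + a3) a2 - max (R + a4) a3"
    and "a1 - a2 \<le> max (R + a2) a1 - max (R + a3) a2"
  using assms by (auto simp: max_def)

lemma m_conc:
  fixes d c a0 a1 a2 a3 :: real
  assumes "0 \<le> a0 - a1" "a0 - a1 \<le> a1 - a2" "a1 - a2 \<le> a2 - a3" "d \<ge> 0" "c > 0"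
  shows "max (d*a1) (-c + d*a0) - max (d*a2) (-c + d*a1) \<le> max (d*a2) (-c + d*a1) - max (d*a3) (-c + d*a2)"
    and "0 \<le> max (d*a1) (-c + d*a0) - max (d*a2) (-c + d*a1)"
proof -
  have h1: "d*(a0-a1) \<le> d*(a1-a2)" "d*(a1-a2) \<le> d*(a2-a3)" "0 \<le> d*(a0-a1)"
    using assms by (auto intro: mult_left_mono)
  show "max (d*a1) (-c + d*a0) - max (d*a2) (-c + d*a1) \<le> max (d*a2) (-c + d*a1) - max (d*a3) (-c + d*a2)"
    using h1 by (auto simp: max_def algebra_simps)
  show "0 \<le> max (d*a1) (-c + d*a0) - max (d*a2) (-c + d*a1)"
    using h1 by (auto simp: max_def algebra_simps)
qed



context
  fixes lam mul muh R c \<beta> :: real and h :: "nat \<Rightarrow> real"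
  assumes lam: "lam > 0" and mul: "0 < mul" and mulh: "mul < muh" and R: "R \<ge> 0" and c: "c > 0"
    and beta: "\<beta> > 0" and sum1: "lam + muh + \<beta> = 1"
    and hmono: "mono h" and hconv: "\<And>x. h (x+1) - h x \<le> h (x+2) - h (x+1)" and h0: "h 0 = 0"
begin

abbreviation V where "V fl \<equiv> vval fl lam mul muh R c h"

lemma hnn: "h x \<ge> 0"
  using hmono h0 by (metis le0 monoD)

lemma Vstep0: "V fl (Suc n) (y,0) = - h y + lam * V fl n (y,1) + mul * V fl n (y-1,0)
     + (if fl then max ((muh - mul) * V fl n (y,0)) (- c + (muh - mul) * V fl n (y-1,0)) else (muh - mul) * V fl n (y,0))"
  using V0op_unif[of h c fl lam mul muh "V fl n" y] h0 c vval_Suc0 by metis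

lemma conc: "0 \<le> V fl n (x,0) - V fl n (x+1,0) \<and> V fl n (x,0) - V fl n (x+1,0) \<le> V fl n (x+1,0) - V fl n (x+2,0)"
proof (induction n arbitrary: x)
  case 0
  then show ?case by simp
next
  case (Suc n)
  show ?case
  proof (cases n)
    case 0
    have e: "V fl (Suc n) (y,0) = - h y" for y
      using Vstep0[of fl n y] c 0 by simp
    show ?thesis using e hconv[of x] hmono by (simp add: monoD)
  next
    case (Suc m)
    define f where "f y = V fl n (y,0)" for y
    define \<delta> where "\<delta> = muh - mul"
    have g: "V fl n (y,1) = max (R + f (y+1)) (f y)" for y
      unfolding f_def Suc using vval_Suc1[of 1] by simp
    have e: "V fl (Suc n) (y,0) = - h y + lam * max (R + f (y+1)) (f y) + mul * f (y-1)
     + (if fl then max (\<delta> * f y) (- c + \<delta> * f (y-1)) else \<delta> * f y)" for y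
      using Vstep0[of fl n y] unfolding g f_def \<delta>_def by simp
    have D: "0 \<le> f y - f (y+1)" "f y - f (y+1) \<le> f (y+1) - f (y+2)" for y
      using Suc.IH[of y] unfolding f_def by auto
    have D0: "0 \<le> f (x-1) - f x" "f (x-1) - f x \<le> f x - f (x+1)"
      using D[of "x-1"] D[of x] by (cases x; simp)+
    have G1: "max (R + f (x+1)) (f x) - max (R + f (x+2)) (f (x+1)) \<le> max (R + f (x+2)) (f (x+1)) - max (R + f (x+3)) (f (x+2))"
      and G2: "f x - f (x+1) \<le> max (R + f (x+1)) (f x) - max (R + f (x+2)) (f (x+1))"
      using g_conc[of "f x" "f (x+1)" "f (x+2)" "f (x+3)" R] D[of x] D[of "x+1"]
      by (simp_all add: numeral_3_eq_3 numeral_2_eq_2)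
    have L1: "lam * max (R + f (x+1)) (f x) - lam * max (R + f (x+2)) (f (x+1)) \<le> lam * max (R + f (x+2)) (f (x+1)) - lam * max (R + f (x+3)) (f (x+2))"
      using mult_left_mono[OF G1, of lam] lam by (simp add: algebra_simps)
    have L2: "0 \<le> lam * max (R + f (x+1)) (f x) - lam * max (R + f (x+2)) (f (x+1))"
      using mult_left_mono[OF order.trans[OF D(1) G2], of lam] lam by (simp add: algebra_simps)
    have U1: "mul * f (x-1) - mul * f x \<le> mul * f x - mul * f (x+1)"
      using mult_left_mono[OF D0(2), of mul] mul by (simp add: algebra_simps)
    have U2: "0 \<le> mul * f (x-1) - mul * f x"
      using mult_left_mono[OF D0(1), of mul] mul by (simp add: algebra_simps)
    have dpos: "\<delta> \<ge> 0" using mulh \<delta>_def by simp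
    have H: "0 \<le> h (x+1) - h x" "h (x+1) - h x \<le> h (x+2) - h (x+1)"
      using hmono hconv[of x] by (auto simp: monoD)
    show ?thesis
    proof (cases fl)
      case True
      have M: "max (\<delta>*f x) (-c + \<delta>*f (x-1)) - max (\<delta>*f (x+1)) (-c + \<delta>*f x) \<le> max (\<delta>*f (x+1)) (-c + \<delta>*f x) - max (\<delta>*f (x+2)) (-c + \<delta>*f (x+1))"
        "0 \<le> max (\<delta>*f x) (-c + \<delta>*f (x-1)) - max (\<delta>*f (x+1)) (-c + \<delta>*f x)"
        using m_conc[of "f (x-1)" "f x" "f (x+1)" "f (x+2)" \<delta> c] D0 D[of x] dpos c by auto
      have e0: "V fl (Suc n) (x,0) = - h x + lam * max (R + f (x+1)) (f x) + mul * f (x-1) + max (\<delta> * f x) (- c + \<delta> * f (x-1))"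
        using e[of x] True by simp
      have e1: "V fl (Suc n) (x+1,0) = - h (x+1) + lam * max (R + f (x+2)) (f (x+1)) + mul * f x + max (\<delta> * f (x+1)) (- c + \<delta> * f x)"
        using e[of "x+1"] True by simp
      have e2: "V fl (Suc n) (x+2,0) = - h (x+2) + lam * max (R + f (x+3)) (f (x+2)) + mul * f (x+1) + max (\<delta> * f (x+2)) (- c + \<delta> * f (x+1))"
        using e[of "x+2"] True by (simp add: numeral_3_eq_3 numeral_2_eq_2)
      show ?thesis using e0 e1 e2 M L1 L2 U1 U2 H by linarith
    next
      case False
      have M: "\<delta>*f x - \<delta>*f (x+1) \<le> \<delta>*f (x+1) - \<delta>*f (x+2)" "0 \<le> \<delta>*f x - \<delta>*f (x+1)"
        using mult_left_mono[OF D(2)[of x], of \<delta>] mult_left_mono[OF D(1)[of x], of \<delta>] dpos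
        by (simp_all add: algebra_simps)
      have e0: "V fl (Suc n) (x,0) = - h x + lam * max (R + f (x+1)) (f x) + mul * f (x-1) + \<delta> * f x"
        using e[of x] False by simp
      have e1: "V fl (Suc n) (x+1,0) = - h (x+1) + lam * max (R + f (x+2)) (f (x+1)) + mul * f x + \<delta> * f (x+1)"
        using e[of "x+1"] False by simp
      have e2: "V fl (Suc n) (x+2,0) = - h (x+2) + lam * max (R + f (x+3)) (f (x+2)) + mul * f (x+1) + \<delta> * f (x+2)"
        using e[of "x+2"] False by (simp add: numeral_3_eq_3 numeral_2_eq_2)
      show ?thesis using e0 e1 e2 M L1 L2 U1 U2 H by linarith
    qed
  qed
qed

end



context
  fixes lam mul muh R c \<beta> :: real and h :: "nat \<Rightarrow> real"
  assumes lam: "lam > 0" and mul: "0 < mul" and mulh: "mul < muh" and R: "R \<ge> 0" and c: "c > 0"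
    and beta: "\<beta> > 0" and sum1: "lam + muh + \<beta> = 1"
    and hmono: "mono h" and hconv: "\<And>x. h (x+1) - h x \<le> h (x+2) - h (x+1)" and h0: "h 0 = 0"
begin

abbreviation W where "W fl \<equiv> vval fl lam mul muh R c h"

lemmas ctxD = lam mul mulh R c beta sum1 hmono hconv h0

lemma Wstep0: "W fl (Suc n) (y,0) = - h y + lam * W fl n (y,1) + mul * W fl n (y-1,0)
     + (if fl then max ((muh - mul) * W fl n (y,0)) (- c + (muh - mul) * W fl n (y-1,0)) else (muh - mul) * W fl n (y,0))"
  using Vstep0[OF ctxD] .

lemma hnn': "h x \<ge> 0" using hnn[OF ctxD] .

lemma cmp: "W False n (x,i) \<le> W True n (x,i)"
proof (induction n arbitrary: x i)
  case 0 then show ?case by simp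
next
  case (Suc n)
  have d: "muh - mul \<ge> 0" using mulh by simp
  have z: "W False (Suc n) (y,0) \<le> W True (Suc n) (y,0)" for y
  proof -
    have a: "lam * W False n (y,1) \<le> lam * W True n (y,1)" using Suc.IH lam by (simp add: mult_left_mono)
    have b: "mul * W False n (y-1,0) \<le> mul * W True n (y-1,0)" using Suc.IH mul by (simp add: mult_left_mono)
    have cc: "(muh - mul) * W False n (y,0) \<le> (muh - mul) * W True n (y,0)" using Suc.IH d by (simp add: mult_left_mono)
    show ?thesis using Wstep0[of False n y] Wstep0[of True n y] a b cc by (auto simp: max_def)
  qed
  show ?case
  proof (cases "i = 0")
    case True then show ?thesis using z by simp
  next
    case False
    then show ?thesis using vval_Suc1[OF False, of False lam mul muh R c h n x]
        vval_Suc1[OF False, of True lam mul muh R c h n x] z[of x] z[of "x+1"] by (auto simp: max_def)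
  qed
qed

lemma ub: "W fl n s \<le> R / \<beta>"
proof (induction n arbitrary: s)
  case 0 then show ?case using R beta by simp
next
  case (Suc n)
  have d: "muh - mul \<ge> 0" using mulh by simp
  have z: "W fl (Suc n) (y,0) \<le> (1 - \<beta>) * (R / \<beta>)" for y
  proof -
    have a: "lam * W fl n (y,1) \<le> lam * (R/\<beta>)" using mult_left_mono[OF Suc.IH, of lam] lam by simp
    have b: "mul * W fl n (y-1,0) \<le> mul * (R/\<beta>)" using mult_left_mono[OF Suc.IH, of mul] mul by simp
    have cc: "(muh - mul) * W fl n (y,0) \<le> (muh - mul) * (R/\<beta>)" using mult_left_mono[OF Suc.IH d] by simp
    have cd: "(muh - mul) * W fl n (y-1,0) \<le> (muh - mul) * (R/\<beta>)" using mult_left_mono[OF Suc.IH d] by simp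
    have "W fl (Suc n) (y,0) \<le> lam * (R/\<beta>) + mul * (R/\<beta>) + (muh - mul) * (R/\<beta>)"
      using Wstep0[of fl n y] a b cc cd c hnn'[of y] by auto
    also have "\<dots> = (lam + muh) * (R / \<beta>)" by (simp only: algebra_simps)
    also have "\<dots> = (1 - \<beta>) * (R / \<beta>)" using sum1 by (simp add: eq_diff_eq add.commute)
    finally show ?thesis .
  qed
  obtain x i where s: "s = (x,i)" by fastforce
  have rb: "R + (1 - \<beta>) * (R / \<beta>) = R / \<beta>" using beta by (simp add: field_simps)
  have rb2: "(1 - \<beta>) * (R / \<beta>) \<le> R / \<beta>" using beta R by (simp add: field_simps)
  show ?case
  proof (cases "i = 0")
    case True then show ?thesis using z[of x] s rb2 by simp
  next
    case False
    then show ?thesis using vval_Suc1[OF False, of fl lam mul muh R c h n x] z[of x] z[of "x+1"] s rb rb2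
      by (simp add: max_def)
  qed
qed

lemma one_ge: "W fl n (x,0) \<le> W fl n (x,Suc 0)"
proof (cases n)
  case 0 then show ?thesis by simp
next
  case (Suc m)
  show ?thesis unfolding Suc vval_Suc1[of "Suc 0" fl lam mul muh R c h m x, simplified] by simp
qed

lemma lb: "W False n (x,0) \<ge> - h x / \<beta>"
proof (induction n arbitrary: x)
  case 0 then show ?case using hnn' beta by simp
next
  case (Suc n)
  have d: "muh - mul \<ge> 0" using mulh by simp
  have a: "lam * W False n (x,1) \<ge> lam * (- h x / \<beta>)"
    using mult_left_mono[OF order.trans[OF Suc.IH[of x] one_ge[of False n x]], of lam] lam by simp
  have hm: "h (x-1) \<le> h x" using hmono by (simp add: monoD)
  have b0: "- h x / \<beta> \<le> - h (x-1) / \<beta>" using hm beta by (simp add: divide_right_mono)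
  have b: "mul * W False n (x-1,0) \<ge> mul * (- h x / \<beta>)"
    using mult_left_mono[OF order.trans[OF b0 Suc.IH[of "x-1"]], of mul] mul by simp
  have cc: "(muh - mul) * W False n (x,0) \<ge> (muh - mul) * (- h x / \<beta>)"
    using mult_left_mono[OF Suc.IH[of x] d] by simp
  have "W False (Suc n) (x,0) \<ge> - h x + lam * (- h x / \<beta>) + mul * (- h x / \<beta>) + (muh - mul) * (- h x / \<beta>)"
    using Wstep0[of False n x] a b cc by simp
  moreover have "- h x + lam * (- h x / \<beta>) + mul * (- h x / \<beta>) + (muh - mul) * (- h x / \<beta>) = - h x / \<beta>"
  proof -
    have "- h x + lam * (- h x / \<beta>) + mul * (- h x / \<beta>) + (muh - mul) * (- h x / \<beta>) = - h x + (lam + muh) * (- h x / \<beta>)"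
      by (simp only: algebra_simps)
    also have "\<dots> = - h x + (1 - \<beta>) * (- h x / \<beta>)" using sum1 by (simp add: eq_diff_eq add.commute)
    also have "\<dots> = - h x / \<beta>" using beta by (simp add: field_simps)
    finally show ?thesis .
  qed
  ultimately show ?case by simp
qed

end



lemma summ_geo:
  fixes a :: "nat \<Rightarrow> real" and \<gamma> :: real and J :: nat
  assumes J: "J > 0" and g0: "0 \<le> \<gamma>" and g1: "\<gamma> < 1" and an: "\<And>n. a n \<ge> 0"
    and step: "\<And>n. a (n+J) \<le> \<gamma> * a n"
  shows "summable a"
proof -
  have iter: "a (q*J + r) \<le> \<gamma>^q * a r" for q r
  proof (induction q)
    case 0 then show ?case by simp
  next
    case (Suc q)
    have "a (Suc q * J + r) = a ((q*J + r) + J)" by (simp add: algebra_simps)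
    also have "\<dots> \<le> \<gamma> * a (q*J+r)" by (rule step)
    also have "\<dots> \<le> \<gamma> * (\<gamma>^q * a r)" using Suc.IH g0 by (rule mult_left_mono)
    finally show ?case by simp
  qed
  define A where "A = Max (a ` {..<J})"
  have aA: "a r \<le> A" if "r < J" for r unfolding A_def using that by (intro Max_ge) auto
  have A0: "0 \<le> A" using aA[of 0] an[of 0] J by simp
  define g where "g = max \<gamma> (1/2)"
  have gg: "\<gamma> \<le> g" "0 < g" "g < 1" using g1 by (auto simp: g_def)
  define \<rho> where "\<rho> = root J g"
  have \<rho>: "0 < \<rho>" "\<rho> < 1" "\<rho> ^ J = g" using J gg by (auto simp: \<rho>_def real_root_gt_zero)
  have bound: "a n \<le> (A / \<rho>^J) * \<rho>^n" for n
  proof -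
    have "a n = a ((n div J) * J + n mod J)" by simp
    also have "\<dots> \<le> \<gamma>^(n div J) * a (n mod J)" by (rule iter)
    also have "\<dots> \<le> g^(n div J) * A"
      using aA[of "n mod J"] J g0 gg an[of "n mod J"]
      by (intro mult_mono power_mono) auto
    also have "g^(n div J) = \<rho>^(J * (n div J))" using \<rho> by (simp add: power_mult)
    also have "\<rho>^(J * (n div J)) \<le> \<rho>^n / \<rho>^J"
    proof -
      have "n \<le> J * (n div J) + J"
        using J by (metis add.commute div_mult_mod_eq less_imp_le_nat mod_less_divisor mult.commute nat_add_left_cancel_le)
      then have "\<rho>^(J * (n div J) + J) \<le> \<rho>^n" using \<rho> by (intro power_decreasing) auto
      then show ?thesis using \<rho> gg by (simp add: power_add pos_le_divide_eq mult.commute)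
    qed
    finally show ?thesis using A0 \<rho> by (simp add: field_simps mult_right_mono)
  qed
  show ?thesis
    by (rule summable_comparison_test[of _ "\<lambda>n. (A / \<rho>^J) * \<rho>^n"])
       (use an bound \<rho> in \<open>auto intro!: summable_mult summable_geometric\<close>)
qed




lemma absmax: "\<bar>a - a'\<bar> \<le> (E::real) \<Longrightarrow> \<bar>b - b'\<bar> \<le> E \<Longrightarrow> \<bar>max a b - max a' b'\<bar> \<le> E"
  by (auto simp: max_def abs_le_iff)

lemma absmul: "\<bar>u - u'\<bar> \<le> (E::real) \<Longrightarrow> k \<ge> 0 \<Longrightarrow> \<bar>k*u - k*u'\<bar> \<le> k*E"
  by (metis abs_mult abs_of_nonneg mult_left_mono right_diff_distrib)

context
  fixes lam mul muh R c \<beta> :: real and h :: "nat \<Rightarrow> real"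
  assumes lam: "lam > 0" and mul: "0 < mul" and mulh: "mul < muh" and R: "R \<ge> 0" and c: "c > 0"
    and beta: "\<beta> > 0" and sum1: "lam + muh + \<beta> = 1"
    and hmono: "mono h" and hconv: "\<And>x. h (x+1) - h x \<le> h (x+2) - h (x+1)" and h0: "h 0 = 0"
    and A1: "Assumption1 lam mul muh R c \<beta> h"
begin

abbreviation U where "U fl \<equiv> vval fl lam mul muh R c h"

lemmas ctxF = lam mul mulh R c beta sum1 hmono hconv h0

lemma summ_a: "summable (\<lambda>n. (lam+muh)^n * (R + c + h (x0 + n)))"
proof -
  obtain \<gamma> J where g: "0 \<le> \<gamma>" "\<gamma> < 1" "J > 0"
    and ineq: "\<And>x. ((lam + muh) / (lam + muh + \<beta>)) ^ J * (R + c + h (x + J)) \<le> \<gamma> * (R + c + h x)"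
    using A1 unfolding Assumption1_def by blast
  have ineq': "(lam + muh) ^ J * (R + c + h (x + J)) \<le> \<gamma> * (R + c + h x)" for x
    using ineq[of x] sum1 by simp
  have L0: "0 \<le> lam + muh" using lam mul mulh by simp
  show ?thesis
  proof (rule summ_geo[OF g(3) g(1) g(2)])
    show "0 \<le> (lam+muh)^n * (R + c + h (x0 + n))" for n
      using L0 R c hnn'[OF ctxF, of "x0+n"] by simp
    show "(lam+muh)^(n+J) * (R + c + h (x0 + (n+J))) \<le> \<gamma> * ((lam+muh)^n * (R + c + h (x0 + n)))" for n
    proof -
      have "(lam+muh)^(n+J) * (R + c + h (x0 + (n+J))) = (lam+muh)^n * ((lam+muh)^J * (R + c + h ((x0 + n) + J)))"
        by (simp add: power_add algebra_simps)
      also have "\<dots> \<le> (lam+muh)^n * (\<gamma> * (R + c + h (x0 + n)))"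
        using ineq'[of "x0+n"] L0 by (intro mult_left_mono) auto
      finally show ?thesis by (simp add: algebra_simps)
    qed
  qed
qed

lemma contr:
  assumes H: "\<And>y i. y \<le> m + 1 \<Longrightarrow> \<bar>U fl (Suc n) (y,i) - U fl n (y,i)\<bar> \<le> D"
  shows "y \<le> m \<Longrightarrow> \<bar>U fl (Suc (Suc n)) (y,i) - U fl (Suc n) (y,i)\<bar> \<le> (lam + muh) * D"
proof -
  have d: "muh - mul \<ge> 0" using mulh by simp
  have z: "\<bar>U fl (Suc (Suc n)) (y,0) - U fl (Suc n) (y,0)\<bar> \<le> (lam + muh) * D" if y: "y \<le> m+1" for y
  proof -
    have a: "\<bar>lam * U fl (Suc n) (y,1) - lam * U fl n (y,1)\<bar> \<le> lam * D" using absmul[OF H[OF y] ] lam by simp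
    have b: "\<bar>mul * U fl (Suc n) (y-1,0) - mul * U fl n (y-1,0)\<bar> \<le> mul * D" using absmul[OF H, of "y-1"] y mul by simp
    have e1: "\<bar>(muh - mul) * U fl (Suc n) (y,0) - (muh - mul) * U fl n (y,0)\<bar> \<le> (muh - mul) * D" using absmul[OF H[OF y] d] by simp
    have e2: "\<bar>(- c + (muh - mul) * U fl (Suc n) (y-1,0)) - (- c + (muh - mul) * U fl n (y-1,0))\<bar> \<le> (muh - mul) * D"
      using absmul[OF H d, of "y-1"] y by simp
    have m: "\<bar>(if fl then max ((muh - mul) * U fl (Suc n) (y,0)) (- c + (muh - mul) * U fl (Suc n) (y-1,0)) else (muh - mul) * U fl (Suc n) (y,0))
      - (if fl then max ((muh - mul) * U fl n (y,0)) (- c + (muh - mul) * U fl n (y-1,0)) else (muh - mul) * U fl n (y,0))\<bar> \<le> (muh - mul) * D"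
      using absmax[OF e1 e2] e1 by auto
    have "\<bar>U fl (Suc (Suc n)) (y,0) - U fl (Suc n) (y,0)\<bar> \<le> lam * D + mul * D + (muh - mul) * D"
      using Vstep0[OF ctxF, of fl "Suc n" y] Vstep0[OF ctxF, of fl n y] a b m by (simp add: abs_le_iff)
    also have "\<dots> = (lam + muh) * D" by (simp add: algebra_simps)
    finally show ?thesis .
  qed
  assume y: "y \<le> m"
  show ?thesis
  proof (cases "i = 0")
    case True then show ?thesis using z y by simp
  next
    case False
    have "\<bar>max (R + U fl (Suc (Suc n)) (y+1,0)) (U fl (Suc (Suc n)) (y,0)) - max (R + U fl (Suc n) (y+1,0)) (U fl (Suc n) (y,0))\<bar> \<le> (lam+muh)*D"
      using z y by (intro absmax) auto
    then show ?thesis using vval_Suc1[OF False, of fl lam mul muh R c h "Suc n" y] vval_Suc1[OF False, of fl lam mul muh R c h n y] by simp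
  qed
qed

lemma diffb: "y \<le> m \<Longrightarrow> \<bar>U fl (Suc n) (y,i) - U fl n (y,i)\<bar> \<le> (lam+muh)^n * (R + h (m + n + 1))"
proof (induction n arbitrary: m y i)
  case 0
  have e: "U fl (Suc 0) (z,0) = - h z" for z using Vstep0[OF ctxF, of fl 0 z] c by simp
  have hm: "h y \<le> h (m+1)" "h (y+1) \<le> h (m+1)" using hmono 0 by (auto simp: monoD)
  show ?case
  proof (cases "i = 0")
    case True then show ?thesis using e[of y] hm hnn'[OF ctxF, of y] R by simp
  next
    case False
    then show ?thesis using vval_Suc1[OF False, of fl lam mul muh R c h 0 y] e[of y] e[of "y+1"] hm
        hnn'[OF ctxF, of y] hnn'[OF ctxF, of "y+1"] R by (simp add: max_def abs_le_iff)
  qed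
next
  case (Suc n)
  have "\<bar>U fl (Suc (Suc n)) (y,i) - U fl (Suc n) (y,i)\<bar> \<le> (lam + muh) * ((lam+muh)^n * (R + h ((m+1) + n + 1)))"
    by (rule contr[OF Suc.IH Suc.prems])
  then show ?case by (simp add: algebra_simps)
qed

lemma conv: "(\<lambda>n. U fl n s) \<longlonglongrightarrow> vinf fl lam mul muh R c h s"
proof -
  obtain x i where s: "s = (x,i)" by fastforce
  define d where "d k = U fl (Suc k) s - U fl k s" for k
  have "summable d"
  proof (rule summable_comparison_test)
    show "summable (\<lambda>n. (lam+muh)^n * (R + c + h ((x+1) + n)))" by (rule summ_a)
    show "\<exists>N. \<forall>n\<ge>N. norm (d n) \<le> (lam+muh)^n * (R + c + h ((x+1) + n))"
    proof (intro exI allI impI)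
      fix n
      have "\<bar>d n\<bar> \<le> (lam+muh)^n * (R + h (x + n + 1))" unfolding d_def s by (rule diffb) simp
      also have "\<dots> \<le> (lam+muh)^n * (R + c + h ((x+1) + n))"
        using lam mul mulh c by (intro mult_left_mono) auto
      finally show "norm (d n) \<le> (lam+muh)^n * (R + c + h ((x+1) + n))" by simp
    qed
  qed
  then have "(\<lambda>n. \<Sum>k<n. d k) \<longlonglongrightarrow> suminf d" by (rule summable_LIMSEQ)
  moreover have "(\<Sum>k<n. d k) = U fl n s" for n unfolding d_def using sum_lessThan_telescope[of "\<lambda>k. U fl k s" n] by simp
  ultimately have L: "(\<lambda>n. U fl n s) \<longlonglongrightarrow> suminf d" by simp
  then show ?thesis unfolding vinf_def using limI[OF L] by simp
qed

end



lemma Tthr_ge: "Tthr f \<theta> \<ge> -1"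
proof (cases "{k. f k \<le> \<theta>} = {}")
  case True then show ?thesis by (simp add: Tthr_def)
next
  case False
  then obtain k where k: "f k \<le> \<theta>" by auto
  have "ereal (real k) \<le> Sup ((\<lambda>k. ereal (real k)) ` {k. f k \<le> \<theta>})"
    using k by (intro Sup_upper) auto
  moreover have "-1 \<le> ereal (real k)"
  proof -
    have "(-1::ereal) \<le> 0" "0 \<le> ereal (real k)" by simp_all
    then show ?thesis by (rule order.trans)
  qed
  ultimately have "-1 \<le> Sup ((\<lambda>k. ereal (real k)) ` {k. f k \<le> \<theta>})" by (rule order.trans[rotated])
  then show ?thesis unfolding Tthr_def if_not_P[OF False] .
qed

lemma Tthr_iff:
  assumes mono: "\<And>x. f x \<le> f (Suc x)"
  shows "(ereal (real k) \<le> Tthr f \<theta>) = (f k \<le> \<theta>)"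
proof
  assume "f k \<le> \<theta>"
  then show "ereal (real k) \<le> Tthr f \<theta>" unfolding Tthr_def by (auto intro!: Sup_upper)
next
  assume le: "ereal (real k) \<le> Tthr f \<theta>"
  show "f k \<le> \<theta>"
  proof (rule ccontr)
    assume nk: "\<not> f k \<le> \<theta>"
    have lt: "j < k" if "f j \<le> \<theta>" for j
    proof (rule ccontr)
      assume "\<not> j < k"
      then have "k \<le> j" by simp
      then have "f k \<le> f j" by (rule lift_Suc_mono_le[of f, OF mono])
      then show False using that nk by simp
    qed
    show False
    proof (cases "{k. f k \<le> \<theta>} = {}")
      case True
      then have "Tthr f \<theta> = -1" unfolding Tthr_def by simp
      then have "ereal (real k) \<le> -1" using le by simp
      moreover have "(-1::ereal) < 0" "0 \<le> ereal (real k)" by simp_all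
      ultimately show False by (meson le_less_trans linorder_not_le)
    next
      case False
      have "Sup ((\<lambda>k. ereal (real k)) ` {k. f k \<le> \<theta>}) \<le> ereal (real k - 1)"
        using lt by (intro Sup_least) (force simp: of_nat_diff)
      have eq: "Tthr f \<theta> = Sup ((\<lambda>k. ereal (real k)) ` {k. f k \<le> \<theta>})"
        unfolding Tthr_def by (rule if_not_P[OF False])
      have "ereal (real k) \<le> ereal (real k - 1)" using order.trans[OF le[unfolded eq] \<open>Sup _ \<le> _\<close>] .
      then show False by simp
    qed
  qed
qed

context
  fixes lam mul muh R c \<beta> :: real and h :: "nat \<Rightarrow> real"
  assumes lam: "lam > 0" and mul: "0 < mul" and mulh: "mul < muh" and R: "R \<ge> 0" and c: "c > 0"
    and beta: "\<beta> > 0" and sum1: "lam + muh + \<beta> = 1"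
    and hmono: "mono h" and hconv: "\<And>x. h (x+1) - h x \<le> h (x+2) - h (x+1)" and h0: "h 0 = 0"
    and A1: "Assumption1 lam mul muh R c \<beta> h"
begin

abbreviation VF where "VF fl \<equiv> vinf fl lam mul muh R c h"
abbreviation VN where "VN fl \<equiv> vval fl lam mul muh R c h"

lemmas ctxG = lam mul mulh R c beta sum1 hmono hconv h0
lemmas ctx1G = ctxG A1

lemma cv: "(\<lambda>n. VN fl n s) \<longlonglongrightarrow> VF fl s" using conv[OF ctx1G] .

lemma cvS: "(\<lambda>n. VN fl (Suc n) s) \<longlonglongrightarrow> VF fl s" using cv by (rule LIMSEQ_Suc)

lemma bell0: "VF fl (x,0) = - h x + lam * VF fl (x,1) + mul * VF fl (x-1,0)
     + (if fl then max ((muh - mul) * VF fl (x,0)) (- c + (muh - mul) * VF fl (x-1,0)) else (muh - mul) * VF fl (x,0))"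
proof -
  have "(\<lambda>n. VN fl (Suc n) (x,0)) \<longlonglongrightarrow> - h x + lam * VF fl (x,1) + mul * VF fl (x-1,0)
     + (if fl then max ((muh - mul) * VF fl (x,0)) (- c + (muh - mul) * VF fl (x-1,0)) else (muh - mul) * VF fl (x,0))"
    unfolding Vstep0[OF ctxG] by (cases fl) (simp_all, (intro tendsto_intros cv)+)
  then show ?thesis using cvS LIMSEQ_unique by blast
qed

lemma bell1: "i \<noteq> 0 \<Longrightarrow> VF fl (x,i) = max (R + VF fl (x+1,0)) (VF fl (x,0))"
proof -
  assume i: "i \<noteq> 0"
  have "(\<lambda>n. VN fl (Suc n) (x,i)) \<longlonglongrightarrow> max (R + VF fl (x+1,0)) (VF fl (x,0))"
    unfolding vval_Suc1[OF i] by (intro tendsto_intros cvS)+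
  then show ?thesis using cvS LIMSEQ_unique by blast
qed

lemma concL: "VF fl (x,0) - VF fl (x+1,0) \<le> VF fl (x+1,0) - VF fl (x+2,0)"
  by (rule LIMSEQ_le[OF tendsto_diff[OF cv cv] tendsto_diff[OF cv cv]]) (use conc[OF ctxG] in auto)

lemma cmpL: "VF False s \<le> VF True s"
proof -
  obtain x i where "s = (x,i)" by fastforce
  then show ?thesis using cmp[OF ctxG] by (intro LIMSEQ_le[OF cv cv]) auto
qed

lemma ubL: "VF fl s \<le> R / \<beta>"
  by (rule LIMSEQ_le_const2[OF cv]) (use ub[OF ctxG] in auto)

lemma lbL: "VF False (x,0) \<ge> - h x / \<beta>"
  by (rule LIMSEQ_le_const[OF cv]) (use lb[OF ctxG] in auto)

lemma decayL: "(\<lambda>n. (lam+muh)^n * (R + c + h (x + n)) / \<beta>) \<longlonglongrightarrow> 0"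
  using tendsto_divide_zero[OF summable_LIMSEQ_zero[OF summ_a[OF ctx1G, of x]], of \<beta>] by simp

end



theorem proposition2:
  fixes lam mul muh R c \<beta> :: real and h :: "nat \<Rightarrow> real"
  assumes "lam > 0" and "0 < mul" and "mul < muh" and "R \<ge> 0" and "c > 0"
    and "\<beta> > 0" and "lam + muh + \<beta> = 1"
    and "mono h" and "\<And>x. h (x+1) - h x \<le> h (x+2) - h (x+1)" and "h 0 = 0"
    and "Assumption1 lam mul muh R c \<beta> h"
    and "1 + Tthr (Delta0 (vinf True lam mul muh R c h)) (c / (muh - mul))
           \<ge> Tthr (Delta0 (vinf True lam mul muh R c h)) R + 1"
  shows "Tthr (Delta0 (vinf False lam mul muh R c h)) R
           = Tthr (Delta0 (vinf True lam mul muh R c h)) R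
         \<and> (\<forall>i\<in>{0,1}. \<forall>x::nat.
              ereal (real x) \<le> 1 + Tthr (Delta0 (vinf True lam mul muh R c h)) (c / (muh - mul))
              \<longrightarrow> vinf True lam mul muh R c h (x,i) - vinf False lam mul muh R c h (x,i) = 0)"
proof -
  note B0 = bell0[OF assms(1-11)] and B1 = bell1[OF assms(1-11)] and CC = concL[OF assms(1-11)]
    and CM = cmpL[OF assms(1-11)] and UB = ubL[OF assms(1-11)] and LB = lbL[OF assms(1-11)]
    and DC = decayL[OF assms(1-11)]
  define v where "v = vinf True lam mul muh R c h"
  define w where "w = vinf False lam mul muh R c h"
  define \<delta> where "\<delta> = muh - mul"
  define \<Lambda> where "\<Lambda> = lam + muh"
  have dpos: "\<delta> > 0" using assms(3) by (simp add: \<delta>_def)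
  have L0: "0 \<le> \<Lambda>" "\<Lambda> < 1" using assms(1-3,6,7) by (auto simp: \<Lambda>_def)
  define Dv where "Dv = Delta0 v"
  define Dw where "Dw = Delta0 w"
  have monoDv: "Dv x \<le> Dv (Suc x)" for x using CC[of True x] by (simp add: Dv_def Delta0_def v_def)
  have monoDw: "Dw x \<le> Dw (Suc x)" for x using CC[of False x] by (simp add: Dw_def Delta0_def w_def)
  define Ts where "Ts = Tthr Dv (c / \<delta>)"
  define Td where "Td = Tthr Dv R"
  have hyp: "Td + 1 \<le> 1 + Ts" using assms(12) by (simp add: Ts_def Td_def Dv_def v_def \<delta>_def)
  have TdTs: "Td \<le> Ts"
    using hyp Tthr_ge[of Dv R] Tthr_ge[of Dv "c/\<delta>"] unfolding Ts_def[symmetric] Td_def[symmetric]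
    by (cases Td; cases Ts) auto
  define S where "S x \<longleftrightarrow> ereal (real x) \<le> 1 + Ts" for x :: nat
  have Sa: "Dv x \<le> c / \<delta>" if "S (x+1)" for x
  proof -
    have "ereal (real x) \<le> Ts" using that Tthr_ge[of Dv "c/\<delta>"] unfolding S_def Ts_def[symmetric]
      by (cases Ts) auto
    then show ?thesis using Tthr_iff[of Dv, OF monoDv] unfolding Ts_def by simp
  qed
  have Sb: "R < Dv x" if "\<not> S (x+1)" for x
  proof -
    have "\<not> ereal (real x) \<le> Ts" using that Tthr_ge[of Dv "c/\<delta>"] unfolding S_def Ts_def[symmetric]
      by (cases Ts) auto
    then have "\<not> ereal (real x) \<le> Td" using TdTs by auto
    then show ?thesis using Tthr_iff[of Dv, OF monoDv] unfolding Td_def by simp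
  qed
  define a where "a x = v (x,0) - w (x,0)" for x
  define e where "e x = v (x,1) - w (x,1)" for x
  have a0: "a x \<ge> 0" for x using CM[of "(x,0)"] by (simp add: a_def v_def w_def)
  have e0: "e x \<ge> 0" for x using CM[of "(x,1)"] by (simp add: e_def v_def w_def)
  have eqA: "a x = lam * e x + mul * a (x-1) + \<delta> * a x" if "S x" for x
  proof -
    have bw: "w (x,0) = - h x + lam * w (x,1) + mul * w (x-1,0) + \<delta> * w (x,0)"
      using B0[of False x] by (simp add: w_def \<delta>_def)
    have mx: "max (\<delta> * v (x,0)) (- c + \<delta> * v (x-1,0)) = \<delta> * v (x,0)"
    proof (cases x)
      case 0 then show ?thesis using assms(5) by simp
    next
      case (Suc y)
      have "Dv y \<le> c / \<delta>" using Sa[of y] that Suc by simp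
      then have "\<delta> * Dv y \<le> c" using dpos by (simp add: pos_le_divide_eq mult.commute)
      then show ?thesis using Suc by (simp add: Dv_def Delta0_def algebra_simps)
    qed
    have bv: "v (x,0) = - h x + lam * v (x,1) + mul * v (x-1,0) + \<delta> * v (x,0)"
      using B0[of True x] mx by (simp add: v_def \<delta>_def)
    show ?thesis using bv bw unfolding a_def e_def by (simp add: algebra_simps)
  qed
  have eqB: "e x \<le> max (a (x+1)) (a x)" for x
  proof -
    have "v (x,1) = max (R + v (x+1,0)) (v (x,0))" using B1[of 1 True x] by (simp add: v_def)
    moreover have "w (x,1) = max (R + w (x+1,0)) (w (x,0))" using B1[of 1 False x] by (simp add: w_def)
    ultimately show ?thesis unfolding e_def a_def by (auto simp: max_def)
  qed
  have eqC: "e x \<le> a x" if "\<not> S (x+1)" for x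
  proof -
    have "R < v (x,0) - v (x+1,0)" using Sb[OF that] by (simp add: Dv_def Delta0_def)
    then have "v (x,1) = v (x,0)" using B1[of 1 True x] by (simp add: v_def max_def)
    moreover have "w (x,1) \<ge> w (x,0)" using B1[of 1 False x] by (simp add: w_def)
    ultimately show ?thesis unfolding e_def a_def by simp
  qed
  have finN: "\<exists>N. \<forall>x. S x \<longleftrightarrow> x \<le> N" if Tinf: "Ts \<noteq> \<infinity>"
  proof -
    have Tg: "-1 \<le> Ts" using Tthr_ge[of Dv "c/\<delta>"] unfolding Ts_def .
    obtain r where r0: "Ts = ereal r" using Tinf Tg by (cases Ts) auto
    have r: "Ts = ereal r" "r \<ge> -1" using r0 Tg by (auto simp: one_ereal_def)
    have "S x \<longleftrightarrow> x \<le> nat \<lfloor>1 + r\<rfloor>" for x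
    proof -
      have "S x \<longleftrightarrow> real x \<le> 1 + r" unfolding S_def r by (simp add: add.commute)
      also have "\<dots> \<longleftrightarrow> int x \<le> \<lfloor>1 + r\<rfloor>" by (simp only: le_floor_iff of_int_of_nat_eq)
      also have "\<dots> \<longleftrightarrow> x \<le> nat \<lfloor>1 + r\<rfloor>"
      proof -
        have fl: "0 \<le> \<lfloor>1 + r\<rfloor>" using r(2) by (subst zero_le_floor) simp
        show ?thesis by (rule le_nat_iff[OF fl, symmetric])
      qed
      finally show ?thesis .
    qed
    then show ?thesis by blast
  qed
  have zero: "a x = 0 \<and> e x = 0" if "S x" for x
  proof (cases "Ts = \<infinity>")
    case True
    then have Sall: "S y" for y by (simp add: S_def)
    define m where "m k = Max (a ` {..k})" for k
    have am: "a y \<le> m k" if "y \<le> k" for y k unfolding m_def using that by (intro Max_ge) auto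
    have mstep: "m k \<le> \<Lambda> * m (k+1)" for k
    proof -
      have "a y \<le> \<Lambda> * m (k+1)" if "y \<le> k" for y
      proof -
        have "e y \<le> m (k+1)" using eqB[of y] am[of "y+1" "k+1"] am[of y "k+1"] that by auto
        moreover have "a (y-1) \<le> m (k+1)" "a y \<le> m (k+1)" using am that by auto
        ultimately have "lam * e y + mul * a (y-1) + \<delta> * a y \<le> lam * m (k+1) + mul * m (k+1) + \<delta> * m (k+1)"
          using assms(1,2) dpos by (intro add_mono mult_left_mono) auto
        also have "\<dots> = \<Lambda> * m (k+1)" by (simp add: \<Lambda>_def \<delta>_def algebra_simps)
        finally show ?thesis using eqA[OF Sall[of y]] by simp
      qed
      then show ?thesis unfolding m_def[of k] by (subst Max_le_iff) auto
    qed
    have mb: "m k \<le> (R + c + h k) / \<beta>" for k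
    proof -
      have "a y \<le> (R + c + h k) / \<beta>" if "y \<le> k" for y
      proof -
        have "v (y,0) \<le> R / \<beta>" using UB by (simp add: v_def)
        moreover have "w (y,0) \<ge> - h y / \<beta>" using LB by (simp add: w_def)
        moreover have "h y \<le> h k" using assms(8) that by (simp add: monoD)
        ultimately show ?thesis unfolding a_def using assms(5,6) by (simp add: field_simps)
      qed
      then show ?thesis unfolding m_def by (subst Max_le_iff) auto
    qed
    have it: "a y \<le> \<Lambda>^j * m (y+j)" for y j
    proof (induction j)
      case 0 then show ?case using am by simp
    next
      case (Suc j)
      have "\<Lambda>^j * m (y+j) \<le> \<Lambda>^j * (\<Lambda> * m (y+j+1))" using mstep L0 by (intro mult_left_mono) auto
      then show ?case using Suc.IH by (simp add: algebra_simps)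
    qed
    have ay: "a y = 0" for y
    proof -
      have "a y \<le> \<Lambda>^j * ((R + c + h (y + j)) / \<beta>)" for j
        using order.trans[OF it[of y j] mult_left_mono[OF mb[of "y+j"]]] L0 by simp
      then have "a y \<le> 0"
        by (intro LIMSEQ_le_const[OF DC[of y]]) (auto simp: \<Lambda>_def)
      then show ?thesis using a0[of y] by simp
    qed
    show ?thesis using ay[of x] ay[of "x+1"] eqB[of x] e0[of x] by simp
  next
    case False
    then obtain N where N: "\<And>y. S y \<longleftrightarrow> y \<le> N" using finN by blast
    define M where "M = Max ((\<lambda>y. max (a y) (e y)) ` {..N})"
    have aM0: "max (a y) (e y) \<le> M" if "y \<le> N" for y unfolding M_def using that by (intro Max_ge) auto
    then have aMa: "a y \<le> M" and aMe: "e y \<le> M" if "y \<le> N" for y using that by fastforce+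
    have abnd: "a y \<le> \<Lambda> * M" if "y \<le> N" for y
    proof -
      have "lam * e y + mul * a (y-1) + \<delta> * a y \<le> lam * M + mul * M + \<delta> * M"
        using assms(1,2) dpos aMa[of y] aMa[of "y-1"] aMe[of y] that by (intro add_mono mult_left_mono) auto
      also have "\<dots> = \<Lambda> * M" by (simp add: \<Lambda>_def \<delta>_def algebra_simps)
      finally show ?thesis using eqA[of y] N[of y] that by simp
    qed
    have ebnd: "e y \<le> \<Lambda> * M" if "y \<le> N" for y
    proof (cases "y < N")
      case True
      then show ?thesis using eqB[of y] abnd[of y] abnd[of "y+1"] that by auto
    next
      case False
      then have "\<not> S (y+1)" using N[of "y+1"] by simp
      then show ?thesis using eqC[of y] abnd[of y] that by auto
    qed
    have "M \<in> (\<lambda>y. max (a y) (e y)) ` {..N}" unfolding M_def by (intro Max_in) auto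
    then obtain y0 where y0: "y0 \<le> N" "M = max (a y0) (e y0)" by auto
    have MM: "M \<le> \<Lambda> * M" using y0 abnd[of y0] ebnd[of y0] by auto
    have "M \<le> 0"
    proof (rule ccontr)
      assume "\<not> M \<le> 0"
      then have "\<Lambda> * M < 1 * M" using L0 by (intro mult_strict_right_mono) auto
      then show False using MM by simp
    qed
    then show ?thesis using aMa[of x] aMe[of x] a0[of x] e0[of x] N[of x] that by auto
  qed
  have Sdown: "S x" if "S (x+1)" for x
  proof -
    have "ereal (real x) \<le> ereal (real (x+1))" by simp
    then show ?thesis using that unfolding S_def by (rule order.trans)
  qed
  have part2: "(Dw k \<le> R) = (Dv k \<le> R)" for k
  proof (cases "S (k+1)")
    case True
    then have "a k = 0" "a (k+1) = 0" using zero Sdown by auto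
    then have "Dw k = Dv k" unfolding Dw_def Dv_def Delta0_def a_def by simp
    then show ?thesis by simp
  next
    case False
    have Rk: "R < Dv k" using Sb[OF False] .
    have "Ts \<noteq> \<infinity>" using False by (auto simp: S_def)
    then obtain N where N: "\<And>y. S y \<longleftrightarrow> y \<le> N" using finN by blast
    have Nk: "N \<le> k" using N[of "k+1"] False by simp
    have "S N" using N by simp
    then have aN: "a N = 0" using zero by simp
    have "\<not> S (N+1)" using N[of "N+1"] by simp
    then have RN: "R < Dv N" using Sb by simp
    have "Dv N \<le> Dw N" using aN a0[of "N+1"] unfolding Dv_def Dw_def Delta0_def a_def by simp
    also have "Dw N \<le> Dw k" using Nk by (rule lift_Suc_mono_le[of Dw, OF monoDw])
    finally show ?thesis using RN Rk by simp
  qed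
  have T2: "Tthr Dw R = Tthr Dv R"
  proof -
    have "{k. Dw k \<le> R} = {k. Dv k \<le> R}" using part2 by auto
    then show ?thesis unfolding Tthr_def by simp
  qed
  have T3: "\<forall>i\<in>{0,1}. \<forall>x::nat. S x \<longrightarrow> v (x,i) - w (x,i) = 0"
    using zero unfolding a_def e_def by auto
  show ?thesis using T2 T3 unfolding S_def Ts_def Dv_def Dw_def v_def w_def \<delta>_def by simp
qed



end
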